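(* Under the hypotheses of the Main Lemma (in particular hypotheses 1–3), define $\alpha_{xy}:=\sum_m u_x(m)u_y(m)$, $\alpha_x:=\sum_y p(y|x)\alpha_{xy}$, $\alpha_y:=\sum_x p(x|y)\alpha_{xy}$, $v_x(m):=\sum_y p(y|x)u_y(m)$, $v_y(m):=\sum_x p(x|y)u_x(m)$, $\Delta:=\frac{c/\varepsilon+1}{\varepsilon}+2$, and let $M_{xy},M_x,M_y$ denote $M$ conditioned on $XY=xy$, on $X=x$, on $Y=y$ respectively. Let $G_1:=\{(x,y): |1-\alpha_{xy}/q|\le1/2,\ |1-\alpha_x/q|\le1/2,\ |1-\alpha_y/q|\le1/2\}$, $G_2:=\{(x,y): S(M_{xy}\|M_x)+S(M_{xy}\|M_y)\le c/\varepsilon\}$, $G:=\{(x,y):\Pr_{m\leftarrow M_{xy}}[u_y(m)/v_x(m)\le2^{\Delta}\text{ and }u_x(m)/v_y(m)\le2^{\Delta}]\ge1-2\varepsilon\}$. Then (1) $\Pr_{(x,y)\leftarrow p}[(x,y)\in G_1]>1-6\varepsilon$; (2) $\Pr_{(x,y)\leftarrow p}[(x,y)\in G_2]\ge1-3\varepsilon/2$; (3) $\Pr_{(x,y)\leftarrow p}[(x,y)\in G_1\cap G_2]\ge1-15\varepsilon/2$; (4) $G_1\cap G_2\subseteq G$.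
   Context: Main Lemma hypotheses: $c\ge1$, $0<\varepsilon<1/3$, $p$ a distribution on finite $\mathcal{X}\times\mathcal{Y}$, $XYM$ jointly distributed on $\mathcal{X}\times\mathcal{Y}\times\mathcal{M}$ ($\mathcal{M}$ finite), functions $u_x,u_y:\mathcal{M}\to[0,1]$, with (1) $\Pr[XYM=xym]=\frac1q p(x,y)u_x(m)u_y(m)$ where $q:=\sum_{x,y,m}p(x,y)u_x(m)u_y(m)>0$; (2) $S(XY\|p)\le\varepsilon^2/4$; (3) $I(X:M\mid Y)+I(Y:M\mid X)\le c$. Here $p(y|x),p(x|y)$ are conditional probabilities under $p$; $S$ is relative entropy and $I$ conditional mutual information (base 2). *)

theory Defs
  imports Complex_Main
begin

definition relent :: "('a::finite \<Rightarrow> real) \<Rightarrow> ('a \<Rightarrow> real) \<Rightarrow> real" where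
  "relent P Q = (\<Sum>a\<in>UNIV. if P a = 0 then 0 else P a * log 2 (P a / Q a))"

definition pXY :: "('x::finite \<Rightarrow> 'y::finite \<Rightarrow> 'm::finite \<Rightarrow> real) \<Rightarrow> 'x \<Rightarrow> 'y \<Rightarrow> real" where
  "pXY P x y = (\<Sum>m\<in>UNIV. P x y m)"
definition pX :: "('x::finite \<Rightarrow> 'y::finite \<Rightarrow> 'm::finite \<Rightarrow> real) \<Rightarrow> 'x \<Rightarrow> real" where
  "pX P x = (\<Sum>y\<in>UNIV. \<Sum>m\<in>UNIV. P x y m)"
definition pY :: "('x::finite \<Rightarrow> 'y::finite \<Rightarrow> 'm::finite \<Rightarrow> real) \<Rightarrow> 'y \<Rightarrow> real" where
  "pY P y = (\<Sum>x\<in>UNIV. \<Sum>m\<in>UNIV. P x y m)"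
definition pXM :: "('x::finite \<Rightarrow> 'y::finite \<Rightarrow> 'm::finite \<Rightarrow> real) \<Rightarrow> 'x \<Rightarrow> 'm \<Rightarrow> real" where
  "pXM P x m = (\<Sum>y\<in>UNIV. P x y m)"
definition pYM :: "('x::finite \<Rightarrow> 'y::finite \<Rightarrow> 'm::finite \<Rightarrow> real) \<Rightarrow> 'y \<Rightarrow> 'm \<Rightarrow> real" where
  "pYM P y m = (\<Sum>x\<in>UNIV. P x y m)"

definition cmi_XM_Y :: "('x::finite \<Rightarrow> 'y::finite \<Rightarrow> 'm::finite \<Rightarrow> real) \<Rightarrow> real" where
  "cmi_XM_Y P = (\<Sum>x\<in>UNIV. \<Sum>y\<in>UNIV. \<Sum>m\<in>UNIV.
     if P x y m = 0 then 0
     else P x y m * log 2 ((P x y m * pY P y) / (pXY P x y * pYM P y m)))"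
definition cmi_YM_X :: "('x::finite \<Rightarrow> 'y::finite \<Rightarrow> 'm::finite \<Rightarrow> real) \<Rightarrow> real" where
  "cmi_YM_X P = (\<Sum>x\<in>UNIV. \<Sum>y\<in>UNIV. \<Sum>m\<in>UNIV.
     if P x y m = 0 then 0
     else P x y m * log 2 ((P x y m * pX P x) / (pXY P x y * pXM P x m)))"

definition margX :: "('x::finite \<Rightarrow> 'y::finite \<Rightarrow> real) \<Rightarrow> 'x \<Rightarrow> real" where
  "margX p x = (\<Sum>y\<in>UNIV. p x y)"
definition margY :: "('x::finite \<Rightarrow> 'y::finite \<Rightarrow> real) \<Rightarrow> 'y \<Rightarrow> real" where
  "margY p y = (\<Sum>x\<in>UNIV. p x y)"
definition cond_y_x :: "('x::finite \<Rightarrow> 'y::finite \<Rightarrow> real) \<Rightarrow> 'x \<Rightarrow> 'y \<Rightarrow> real" where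
  "cond_y_x p x y = p x y / margX p x"
definition cond_x_y :: "('x::finite \<Rightarrow> 'y::finite \<Rightarrow> real) \<Rightarrow> 'y \<Rightarrow> 'x \<Rightarrow> real" where
  "cond_x_y p y x = p x y / margY p y"

end

theory Submission
  imports Defs
begin

lemma relent_ln: "relent P Q * ln 2 = (\<Sum>a\<in>UNIV. if P a = 0 then 0 else P a * ln (P a / Q a))"
  unfolding relent_def sum_distrib_right
  by (rule sum.cong) (auto simp: log_def)

lemma ln_lower: "0 < (x::real) \<Longrightarrow> 1 - 1/x \<le> ln x"
proof -
  assume x: "0 < x"
  have "ln (1/x) \<le> 1/x - 1" using x by (intro ln_le_minus_one) auto
  moreover have "ln (1/x) = - ln x" using x by (simp add: ln_div)
  ultimately show ?thesis by simp
qed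

lemma ln2_ge_half: "ln (2::real) \<ge> 1/2"
  using ln_lower[of 2] by simp

lemma gibbs_pt: "0 < (p::real) \<Longrightarrow> 0 < q \<Longrightarrow> p - q \<le> p * ln (p / q)"
proof -
  assume p: "0<p" and q: "0<q"
  have "1 - q/p \<le> ln (p/q)" using ln_lower[of "p/q"] p q by simp
  hence "p * (1 - q/p) \<le> p * ln (p/q)" using p by (intro mult_left_mono) auto
  thus ?thesis using p by (simp add: algebra_simps)
qed

lemma tail_pt: "0 < (p::real) \<Longrightarrow> 0 < q \<Longrightarrow> - q/2 \<le> p * ln (p / q)"
proof -
  assume p: "0<p" and q: "0<q"
  have "1 - q/(2*p) \<le> ln (2*p/q)" using ln_lower[of "2*p/q"] p q by simp
  also have "ln (2*p/q) = ln 2 + ln (p/q)" using p q ln_mult[of 2 "p/q"] by simp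
  finally have "- q/(2*p) \<le> ln (p/q)" using ln_2_less_1 by linarith
  hence "p * (- q/(2*p)) \<le> p * ln (p/q)" using p by (intro mult_left_mono) auto
  thus ?thesis using p by simp
qed

lemma hell_pt: "0 < (s::real) \<Longrightarrow> 0 < r \<Longrightarrow> 2*s^2 - 2*s*r \<le> s^2 * ln (s^2 / r^2)"
proof -
  assume s: "0<s" and r: "0<r"
  have "1 - r/s \<le> ln (s/r)" using ln_lower[of "s/r"] s r by simp
  moreover have "ln (s^2/r^2) = 2 * ln (s/r)"
  proof -
    have "s^2/r^2 = (s/r)^2" by (simp add: power_divide)
    thus ?thesis using ln_realpow[of "s/r" 2] by simp
  qed
  ultimately have "2*(1 - r/s) \<le> ln (s^2/r^2)" by simp
  hence "s^2 * (2*(1 - r/s)) \<le> s^2 * ln (s^2/r^2)" by (intro mult_left_mono) auto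
  thus ?thesis using s by (simp add: algebra_simps power2_eq_square)
qed

lemma amgm_pt: "0 < (l::real) \<Longrightarrow> 0 \<le> s \<Longrightarrow> 0 \<le> r \<Longrightarrow>
   \<bar>s^2 - r^2\<bar> \<le> (l * (s - r)^2 + 2*(s^2 + r^2)/l)/2"
proof -
  assume l: "0<l" and s: "0\<le>s" and r: "0\<le>r"
  have e0: "s^2 - r^2 = (s-r)*(s+r)" by (simp add: power2_eq_square algebra_simps)
  have e: "\<bar>s^2 - r^2\<bar> = \<bar>s - r\<bar> * (s+r)" unfolding e0 abs_mult using s r by simp
  have "0 \<le> (l*\<bar>s-r\<bar> - (s+r))^2" by simp
  moreover have "(l*\<bar>s-r\<bar> - (s+r))^2 = l^2*(s-r)^2 + (s+r)^2 - 2*l*(\<bar>s-r\<bar>*(s+r))"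
    by (simp add: power2_diff power_mult_distrib algebra_simps)
  ultimately have "2*l*(\<bar>s-r\<bar>*(s+r)) \<le> l^2*(s-r)^2 + (s+r)^2" by linarith
  also have "(s+r)^2 \<le> 2*(s^2+r^2)"
  proof -
    have "2*(s^2+r^2) - (s+r)^2 = (s-r)^2" by (simp add: power2_eq_square algebra_simps)
    thus ?thesis by (metis diff_ge_0_iff_ge zero_le_power2)
  qed
  finally have 1: "2*l*(\<bar>s-r\<bar>*(s+r)) \<le> l^2*(s-r)^2 + 2*(s^2+r^2)" by simp
  have 2: "(l * (s - r)^2 + 2*(s^2 + r^2)/l)/2 = (l^2*(s-r)^2 + 2*(s^2+r^2)) / (2*l)"
    using l by (simp add: add_divide_distrib power2_eq_square)
  show ?thesis unfolding e 2 using 1 l by (simp add: pos_le_divide_eq mult.commute mult.left_commute)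
qed

lemma gibbs:
  fixes P Q :: "'a::finite \<Rightarrow> real"
  assumes "\<forall>a. P a \<ge> 0" "\<forall>a. Q a \<ge> 0" "sum P UNIV = 1" "sum Q UNIV \<le> 1"
    "\<forall>a. P a \<noteq> 0 \<longrightarrow> Q a > 0"
  shows "relent P Q \<ge> 0"
proof -
  have "(\<Sum>a\<in>UNIV. P a - Q a) \<le> (\<Sum>a\<in>UNIV. if P a = 0 then 0 else P a * ln (P a / Q a))"
  proof (rule sum_mono)
    fix a
    show "P a - Q a \<le> (if P a = 0 then 0 else P a * ln (P a / Q a))"
      using assms(1,2,5) gibbs_pt[of "P a" "Q a"] by (cases "P a = 0") (auto simp: order_less_le)
  qed
  hence "0 \<le> relent P Q * ln 2" unfolding relent_ln using assms(3,4) by (simp add: sum_subtractf)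
  thus ?thesis by (simp add: zero_le_mult_iff)
qed

lemma tail:
  fixes P Q :: "'a::finite \<Rightarrow> real"
  assumes "\<forall>a. P a \<ge> 0" "\<forall>a. Q a \<ge> 0" "sum Q UNIV \<le> 1"
    "\<forall>a. P a \<noteq> 0 \<longrightarrow> Q a > 0" "t > 0" "\<forall>a\<in>A. P a > 0 \<longrightarrow> log 2 (P a / Q a) \<ge> t"
  shows "t * sum P A \<le> relent P Q + 1"
proof -
  have "(\<Sum>a\<in>UNIV. (if a\<in>A then t * P a else 0) - Q a) \<le> (\<Sum>a\<in>UNIV. if P a = 0 then 0 else P a * log 2 (P a / Q a))"
  proof (rule sum_mono)
    fix a
    show "(if a\<in>A then t * P a else 0) - Q a \<le> (if P a = 0 then 0 else P a * log 2 (P a / Q a))"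
    proof (cases "P a = 0")
      case True thus ?thesis using assms(2) by auto
    next
      case False
      hence p: "P a > 0" and q: "Q a > 0" using assms(1,4) by (auto simp: order_less_le)
      show ?thesis
      proof (cases "a \<in> A")
        case True
        hence "t \<le> log 2 (P a / Q a)" using assms(6) p by auto
        hence "P a * t \<le> P a * log 2 (P a / Q a)" using p by (intro mult_left_mono) auto
        thus ?thesis using True False q by (simp add: mult.commute)
      next
        case nA: False
        have "- Q a / 2 \<le> P a * ln (P a / Q a)" using tail_pt p q by blast
        hence "- Q a / 2 / ln 2 \<le> P a * ln (P a / Q a) / ln 2" by (intro divide_right_mono) auto
        moreover have "- Q a \<le> - Q a / 2 / ln 2" using ln2_ge_half q ln_2_less_1
          by (simp add: field_simps)
        ultimately show ?thesis using nA False by (simp add: log_def)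
      qed
    qed
  qed
  moreover have "(\<Sum>a\<in>UNIV. (if a\<in>A then t * P a else 0)) = t * sum P A"
    by (simp add: sum.If_cases sum_distrib_left)
  ultimately have "t * sum P A - sum Q UNIV \<le> relent P Q" unfolding relent_def by (simp add: sum_subtractf)
  thus ?thesis using assms(3) by linarith
qed

lemma pinsker:
  fixes P Q :: "'a::finite \<Rightarrow> real"
  assumes "\<forall>a. P a \<ge> 0" "\<forall>a. Q a \<ge> 0" "sum P UNIV = 1" "sum Q UNIV = 1"
    "\<forall>a. P a \<noteq> 0 \<longrightarrow> Q a > 0" "l > 0"
  shows "(\<Sum>a\<in>UNIV. \<bar>P a - Q a\<bar>) \<le> (l * (relent P Q * ln 2) + 4 / l) / 2"
proof -
  let ?T = "\<lambda>a. if P a = 0 then 0 else P a * ln (P a / Q a)"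
  have "(\<Sum>a\<in>UNIV. \<bar>P a - Q a\<bar>) \<le> (\<Sum>a\<in>UNIV. (l * (?T a + Q a - P a) + 2 * (P a + Q a) / l) / 2)"
  proof (rule sum_mono)
    fix a
    define s where "s = sqrt (P a)"
    define r where "r = sqrt (Q a)"
    have P0: "P a \<ge> 0" and Q0: "Q a \<ge> 0" using assms(1,2) by auto
    have s0: "s \<ge> 0" and r0: "r \<ge> 0" unfolding s_def r_def using P0 Q0 by auto
    have Ps: "P a = s^2" and Qr: "Q a = r^2" unfolding s_def r_def using P0 Q0 by simp_all
    have h: "(s - r)^2 \<le> ?T a + Q a - P a"
    proof (cases "P a = 0")
      case True thus ?thesis using Ps Qr by (simp add: power2_eq_square)
    next
      case False
      hence "s > 0" "r > 0" using assms(5) Ps Qr s0 r0 by (auto simp: order_less_le)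
      hence "2*s^2 - 2*s*r \<le> s^2 * ln (s^2 / r^2)" by (rule hell_pt)
      thus ?thesis using False Ps Qr by (simp add: power2_diff)
    qed
    have "\<bar>P a - Q a\<bar> \<le> (l * (s - r)^2 + 2*(P a + Q a)/l)/2"
      using amgm_pt[OF assms(6) s0 r0] Ps Qr by simp
    also have "\<dots> \<le> (l * (?T a + Q a - P a) + 2 * (P a + Q a) / l) / 2"
      using h assms(6) by (intro divide_right_mono add_right_mono mult_left_mono) auto
    finally show "\<bar>P a - Q a\<bar> \<le> (l * (?T a + Q a - P a) + 2 * (P a + Q a) / l) / 2" .
  qed
  also have "\<dots> = (l * (sum ?T UNIV + sum Q UNIV - sum P UNIV) + 2 * (sum P UNIV + sum Q UNIV) / l) / 2"
    by (simp add: sum_divide_distrib[symmetric] sum_distrib_left[symmetric] sum.distrib sum_subtractf)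
  also have "\<dots> = (l * (relent P Q * ln 2) + 4 / l) / 2" using assms(3,4) relent_ln[of P Q] by simp
  finally show ?thesis .
qed

lemma sum_UNIV_prod: "(\<Sum>z\<in>(UNIV::('a::finite\<times>'b::finite) set). f z) = (\<Sum>x\<in>UNIV. \<Sum>y\<in>UNIV. f (x,y))"
  by (simp add: sum.cartesian_product)

lemma sum_set_prod: "(\<Sum>(x,y)\<in>(S::('a::finite\<times>'b::finite) set). f x y) = (\<Sum>x\<in>UNIV. \<Sum>y\<in>UNIV. if (x,y)\<in>S then f x y else 0)"
proof -
  have "(\<Sum>(x,y)\<in>S. f x y) = (\<Sum>z\<in>UNIV \<inter> S. case_prod f z)" by simp
  also have "\<dots> = (\<Sum>z\<in>UNIV. if z \<in> S then case_prod f z else 0)" by (rule sum.inter_restrict) simp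
  also have "\<dots> = (\<Sum>x\<in>UNIV. \<Sum>y\<in>UNIV. if (x,y)\<in>S then f x y else 0)" by (subst sum_UNIV_prod) (simp only: prod.case)
  finally show ?thesis .
qed

lemma sum_set_ind: "(\<Sum>m\<in>(S::'a::finite set). f m) = (\<Sum>m\<in>UNIV. if m\<in>S then f m else 0)"
proof -
  have "(\<Sum>m\<in>S. f m) = (\<Sum>m\<in>UNIV \<inter> S. f m)" by simp
  also have "\<dots> = (\<Sum>m\<in>UNIV. if m\<in>S then f m else 0)" by (rule sum.inter_restrict) simp
  finally show ?thesis .
qed

lemma condX_facts:
  fixes P :: "'x::finite \<Rightarrow> 'y::finite \<Rightarrow> 'm::finite \<Rightarrow> real"
  assumes P0: "\<forall>x y m. P x y m \<ge> 0" and pos: "pXY P x y > 0"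
  shows "\<forall>m. P x y m / pXY P x y \<ge> 0" "\<forall>m. pXM P x m / pX P x \<ge> 0"
    "sum (\<lambda>m. P x y m / pXY P x y) UNIV = 1" "sum (\<lambda>m. pXM P x m / pX P x) UNIV = 1"
    "\<forall>m. P x y m / pXY P x y \<noteq> 0 \<longrightarrow> pXM P x m / pX P x > 0"
proof -
  have pXe: "pX P x = (\<Sum>y\<in>UNIV. pXY P x y)" by (simp add: pX_def pXY_def)
  have "pXY P x y \<le> pX P x" unfolding pXe
    by (rule member_le_sum) (auto simp: pXY_def P0 sum_nonneg)
  hence pXp: "pX P x > 0" using pos by linarith
  have pXM0: "\<And>m. pXM P x m \<ge> 0" by (simp add: pXM_def P0 sum_nonneg)
  show "\<forall>m. P x y m / pXY P x y \<ge> 0" using P0 pos by auto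
  show "\<forall>m. pXM P x m / pX P x \<ge> 0" using pXM0 pXp by auto
  show "sum (\<lambda>m. P x y m / pXY P x y) UNIV = 1" using pos
    by (simp add: sum_divide_distrib[symmetric] pXY_def)
  have "sum (pXM P x) UNIV = pX P x" unfolding pXM_def pX_def by (rule sum.swap)
  thus "sum (\<lambda>m. pXM P x m / pX P x) UNIV = 1" using pXp
    by (simp add: sum_divide_distrib[symmetric])
  show "\<forall>m. P x y m / pXY P x y \<noteq> 0 \<longrightarrow> pXM P x m / pX P x > 0"
  proof (intro allI impI)
    fix m assume "P x y m / pXY P x y \<noteq> 0"
    hence "P x y m > 0" using P0 by (auto simp: order_less_le)
    moreover have "P x y m \<le> pXM P x m" unfolding pXM_def
      by (rule member_le_sum) (auto simp: P0)
    ultimately show "pXM P x m / pX P x > 0" using pXp by auto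
  qed
qed

lemma condY_facts:
  fixes P :: "'x::finite \<Rightarrow> 'y::finite \<Rightarrow> 'm::finite \<Rightarrow> real"
  assumes P0: "\<forall>x y m. P x y m \<ge> 0" and pos: "pXY P x y > 0"
  shows "\<forall>m. P x y m / pXY P x y \<ge> 0" "\<forall>m. pYM P y m / pY P y \<ge> 0"
    "sum (\<lambda>m. P x y m / pXY P x y) UNIV = 1" "sum (\<lambda>m. pYM P y m / pY P y) UNIV = 1"
    "\<forall>m. P x y m / pXY P x y \<noteq> 0 \<longrightarrow> pYM P y m / pY P y > 0"
proof -
  have pYe: "pY P y = (\<Sum>x\<in>UNIV. pXY P x y)" by (simp add: pY_def pXY_def)
  have "pXY P x y \<le> pY P y" unfolding pYe
    by (rule member_le_sum) (auto simp: pXY_def P0 sum_nonneg)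
  hence pYp: "pY P y > 0" using pos by linarith
  have pYM0: "\<And>m. pYM P y m \<ge> 0" by (simp add: pYM_def P0 sum_nonneg)
  show "\<forall>m. P x y m / pXY P x y \<ge> 0" using P0 pos by auto
  show "\<forall>m. pYM P y m / pY P y \<ge> 0" using pYM0 pYp by auto
  show "sum (\<lambda>m. P x y m / pXY P x y) UNIV = 1" using pos
    by (simp add: sum_divide_distrib[symmetric] pXY_def)
  have "sum (pYM P y) UNIV = pY P y" unfolding pYM_def pY_def by (rule sum.swap)
  thus "sum (\<lambda>m. pYM P y m / pY P y) UNIV = 1" using pYp
    by (simp add: sum_divide_distrib[symmetric])
  show "\<forall>m. P x y m / pXY P x y \<noteq> 0 \<longrightarrow> pYM P y m / pY P y > 0"
  proof (intro allI impI)
    fix m assume "P x y m / pXY P x y \<noteq> 0"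
    hence "P x y m > 0" using P0 by (auto simp: order_less_le)
    moreover have "P x y m \<le> pYM P y m" unfolding pYM_def
      by (rule member_le_sum) (auto simp: P0)
    ultimately show "pYM P y m / pY P y > 0" using pYp by auto
  qed
qed

lemma pXY_zero:
  assumes P0: "\<forall>x y m. P x y m \<ge> 0" and "pXY P x y = 0"
  shows "P x y m = 0"
  using assms sum_nonneg_eq_0_iff[of UNIV "P x y"] by (auto simp: pXY_def)

lemma cmiX_ident:
  fixes P :: "'x::finite \<Rightarrow> 'y::finite \<Rightarrow> 'm::finite \<Rightarrow> real"
  assumes P0: "\<forall>x y m. P x y m \<ge> 0"
  shows "(\<Sum>x\<in>UNIV. \<Sum>y\<in>UNIV. pXY P x y * relent (\<lambda>m. P x y m / pXY P x y) (\<lambda>m. pXM P x m / pX P x)) = cmi_YM_X P"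
  unfolding cmi_YM_X_def
proof (intro sum.cong refl)
  fix x y
  show "pXY P x y * relent (\<lambda>m. P x y m / pXY P x y) (\<lambda>m. pXM P x m / pX P x) =
    (\<Sum>m\<in>UNIV. if P x y m = 0 then 0 else P x y m * log 2 (P x y m * pX P x / (pXY P x y * pXM P x m)))"
  proof (cases "pXY P x y = 0")
    case True thus ?thesis using pXY_zero[OF P0 True] by simp
  next
    case False
    show ?thesis unfolding relent_def sum_distrib_left
      by (rule sum.cong) (use False in auto)
  qed
qed

lemma cmiY_ident:
  fixes P :: "'x::finite \<Rightarrow> 'y::finite \<Rightarrow> 'm::finite \<Rightarrow> real"
  assumes P0: "\<forall>x y m. P x y m \<ge> 0"
  shows "(\<Sum>x\<in>UNIV. \<Sum>y\<in>UNIV. pXY P x y * relent (\<lambda>m. P x y m / pXY P x y) (\<lambda>m. pYM P y m / pY P y)) = cmi_XM_Y P"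
  unfolding cmi_XM_Y_def
proof (intro sum.cong refl)
  fix x y
  show "pXY P x y * relent (\<lambda>m. P x y m / pXY P x y) (\<lambda>m. pYM P y m / pY P y) =
    (\<Sum>m\<in>UNIV. if P x y m = 0 then 0 else P x y m * log 2 (P x y m * pY P y / (pXY P x y * pYM P y m)))"
  proof (cases "pXY P x y = 0")
    case True thus ?thesis using pXY_zero[OF P0 True] by simp
  next
    case False
    show ?thesis unfolding relent_def sum_distrib_left
      by (rule sum.cong) (use False in auto)
  qed
qed

theorem mainTheorem6:
  fixes p :: "'x::finite \<Rightarrow> 'y::finite \<Rightarrow> real"
    and ux :: "'x \<Rightarrow> 'm::finite \<Rightarrow> real"
    and uy :: "'y \<Rightarrow> 'm \<Rightarrow> real"
    and P :: "'x \<Rightarrow> 'y \<Rightarrow> 'm \<Rightarrow> real"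
    and c \<epsilon> :: real
  defines "q \<equiv> (\<Sum>x\<in>UNIV. \<Sum>y\<in>UNIV. \<Sum>m\<in>UNIV. p x y * ux x m * uy y m)"
  defines "\<alpha>xy \<equiv> (\<lambda>x y. \<Sum>m\<in>UNIV. ux x m * uy y m)"
  defines "\<alpha>x \<equiv> (\<lambda>x. \<Sum>y\<in>UNIV. cond_y_x p x y * \<alpha>xy x y)"
  defines "\<alpha>y \<equiv> (\<lambda>y. \<Sum>x\<in>UNIV. cond_x_y p y x * \<alpha>xy x y)"
  defines "vx \<equiv> (\<lambda>x m. \<Sum>y\<in>UNIV. cond_y_x p x y * uy y m)"
  defines "vy \<equiv> (\<lambda>y m. \<Sum>x\<in>UNIV. cond_x_y p y x * ux x m)"
  defines "\<Delta> \<equiv> (c / \<epsilon> + 1) / \<epsilon> + 2"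
  defines "Mxy \<equiv> (\<lambda>x y m. P x y m / pXY P x y)"
  defines "Mx \<equiv> (\<lambda>x m. pXM P x m / pX P x)"
  defines "My \<equiv> (\<lambda>y m. pYM P y m / pY P y)"
  defines "G1 \<equiv> {(x, y). p x y > 0 \<and> \<bar>1 - \<alpha>xy x y / q\<bar> \<le> 1/2
                        \<and> \<bar>1 - \<alpha>x x / q\<bar> \<le> 1/2 \<and> \<bar>1 - \<alpha>y y / q\<bar> \<le> 1/2}"
  defines "G2 \<equiv> {(x, y). p x y > 0 \<and>
                  relent (Mxy x y) (Mx x) + relent (Mxy x y) (My y) \<le> c / \<epsilon>}"
  defines "G \<equiv> {(x, y). p x y > 0 \<and>
                  (\<Sum>m\<in>{m. uy y m / vx x m \<le> 2 powr \<Delta> \<and> ux x m / vy y m \<le> 2 powr \<Delta>}.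
                     Mxy x y m) \<ge> 1 - 2 * \<epsilon>}"
  assumes c_ge: "c \<ge> 1"
    and eps_pos: "0 < \<epsilon>" and eps_lt: "\<epsilon> < 1/3"
    and p_nonneg: "\<forall>x y. p x y \<ge> 0"
    and p_sum: "(\<Sum>x\<in>UNIV. \<Sum>y\<in>UNIV. p x y) = 1"
    and ux_range: "\<forall>x m. 0 \<le> ux x m \<and> ux x m \<le> 1"
    and uy_range: "\<forall>y m. 0 \<le> uy y m \<and> uy y m \<le> 1"
    and q_pos: "q > 0"
    and hyp1: "\<forall>x y m. P x y m = p x y * ux x m * uy y m / q"
    and hyp2: "relent (\<lambda>(x, y). pXY P x y) (\<lambda>(x, y). p x y) \<le> \<epsilon>\<^sup>2 / 4"
    and hyp3: "cmi_XM_Y P + cmi_YM_X P \<le> c"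
  shows "(\<Sum>(x, y)\<in>G1. p x y) > 1 - 6 * \<epsilon>
       \<and> (\<Sum>(x, y)\<in>G2. p x y) \<ge> 1 - 3 * \<epsilon> / 2
       \<and> (\<Sum>(x, y)\<in>G1 \<inter> G2. p x y) \<ge> 1 - 15 * \<epsilon> / 2
       \<and> G1 \<inter> G2 \<subseteq> G"
proof -
  have Pd: "\<And>x y m. P x y m = p x y * ux x m * uy y m / q" using hyp1 by auto
  have p0: "\<And>x y. p x y \<ge> 0" using p_nonneg by auto
  have ux0: "\<And>x m. ux x m \<ge> 0" and uy0: "\<And>y m. uy y m \<ge> 0" using ux_range uy_range by auto
  have P0: "\<forall>x y m. P x y m \<ge> 0" using p0 ux0 uy0 q_pos by (simp add: Pd)
  have axy0: "\<And>x y. \<alpha>xy x y \<ge> 0" unfolding \<alpha>xy_def using ux0 uy0 by (simp add: sum_nonneg)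
  have pXYe: "\<And>x y. pXY P x y = p x y * \<alpha>xy x y / q"
    unfolding pXY_def \<alpha>xy_def Pd by (simp add: sum_divide_distrib[symmetric] sum_distrib_left mult.assoc)
  have qe: "q = (\<Sum>x\<in>UNIV. \<Sum>y\<in>UNIV. p x y * \<alpha>xy x y)"
    unfolding q_def \<alpha>xy_def by (simp add: sum_distrib_left mult.assoc)
  have sumXY: "(\<Sum>x\<in>UNIV. \<Sum>y\<in>UNIV. pXY P x y) = 1"
    unfolding pXYe using q_pos by (simp add: sum_divide_distrib[symmetric] qe[symmetric])
  have pXY0: "\<And>x y. pXY P x y \<ge> 0" using p0 axy0 q_pos by (simp add: pXYe)
  have mX0: "\<And>x. margX p x \<ge> 0" by (simp add: margX_def p0 sum_nonneg)
  have mY0: "\<And>y. margY p y \<ge> 0" by (simp add: margY_def p0 sum_nonneg)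
  have mXp: "\<And>x y. p x y \<le> margX p x" unfolding margX_def by (rule member_le_sum) (auto simp: p0)
  have mYp: "\<And>x y. p x y \<le> margY p y" unfolding margY_def by (rule member_le_sum) (auto simp: p0)
  have mXa: "\<And>x. margX p x * \<alpha>x x = (\<Sum>y\<in>UNIV. p x y * \<alpha>xy x y)"
  proof -
    fix x show "margX p x * \<alpha>x x = (\<Sum>y\<in>UNIV. p x y * \<alpha>xy x y)"
    proof (cases "margX p x = 0")
      case True
      hence "\<And>y. p x y = 0" using mXp p0 by (metis order_antisym)
      thus ?thesis using True by simp
    next
      case False
      thus ?thesis unfolding \<alpha>x_def cond_y_x_def sum_distrib_left by (intro sum.cong) auto
    qed
  qed
  have mYa: "\<And>y. margY p y * \<alpha>y y = (\<Sum>x\<in>UNIV. p x y * \<alpha>xy x y)"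
  proof -
    fix y show "margY p y * \<alpha>y y = (\<Sum>x\<in>UNIV. p x y * \<alpha>xy x y)"
    proof (cases "margY p y = 0")
      case True
      hence "\<And>x. p x y = 0" using mYp p0 by (metis order_antisym)
      thus ?thesis using True by simp
    next
      case False
      thus ?thesis unfolding \<alpha>y_def cond_x_y_def sum_distrib_left by (intro sum.cong) auto
    qed
  qed
  have pXe: "\<And>x. pX P x = margX p x * \<alpha>x x / q"
    unfolding mXa by (simp add: pX_def pXY_def[symmetric] pXYe sum_divide_distrib)
  have pYe: "\<And>y. pY P y = margY p y * \<alpha>y y / q"
    unfolding mYa by (simp add: pY_def pXY_def[symmetric] pXYe sum_divide_distrib)
  define L1 where "L1 = (\<Sum>x\<in>UNIV. \<Sum>y\<in>UNIV. \<bar>pXY P x y - p x y\<bar>)"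
  have L1lt: "L1 < \<epsilon>"
  proof -
    let ?A = "\<lambda>(x,y). pXY P x y" and ?B = "\<lambda>(x,y). p x y"
    have a1: "(\<Sum>z\<in>UNIV. \<bar>?A z - ?B z\<bar>) \<le> (4/\<epsilon> * (relent ?A ?B * ln 2) + 4/(4/\<epsilon>))/2"
    proof (rule pinsker)
      show "\<forall>a. 0 \<le> ?A a" using pXY0 by auto
      show "\<forall>a. 0 \<le> ?B a" using p0 by auto
      show "sum ?A UNIV = 1" by (simp add: sum_UNIV_prod sumXY)
      show "sum ?B UNIV = 1" by (simp add: sum_UNIV_prod p_sum)
      show "\<forall>a. ?A a \<noteq> 0 \<longrightarrow> 0 < ?B a" using p0 by (auto simp: pXYe order_less_le)
      show "0 < 4/\<epsilon>" using eps_pos by simp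
    qed
    have a2: "(\<Sum>z\<in>UNIV. \<bar>?A z - ?B z\<bar>) = L1" unfolding L1_def by (simp add: sum_UNIV_prod)
    have a3: "relent ?A ?B * ln 2 \<le> \<epsilon>\<^sup>2 / 4 * ln 2" using hyp2 by (intro mult_right_mono) auto
    have a4: "4/\<epsilon> * (relent ?A ?B * ln 2) \<le> 4/\<epsilon> * (\<epsilon>\<^sup>2 / 4 * ln 2)"
      using a3 eps_pos by (intro mult_left_mono) auto
    have a5: "(4/\<epsilon> * (relent ?A ?B * ln 2) + 4/(4/\<epsilon>))/2 \<le> (4/\<epsilon> * (\<epsilon>\<^sup>2 / 4 * ln 2) + 4/(4/\<epsilon>))/2"
      using a4 by (intro divide_right_mono add_right_mono) auto
    have "L1 \<le> (4/\<epsilon> * (\<epsilon>\<^sup>2 / 4 * ln 2) + 4/(4/\<epsilon>))/2" using a1 a5 unfolding a2 by (rule order_trans)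
    also have "4/\<epsilon> * (\<epsilon>\<^sup>2 / 4 * ln 2) = \<epsilon> * ln 2" using eps_pos by (simp add: power2_eq_square)
    also have "4/(4/\<epsilon>) = \<epsilon>" by simp
    finally have b1: "L1 \<le> (\<epsilon> * ln 2 + \<epsilon>) / 2" .
    have b2: "\<epsilon> * ln 2 < \<epsilon>" using mult_strict_left_mono[OF ln_2_less_1 eps_pos] by simp
    have b3: "(\<epsilon> * ln 2 + \<epsilon>) / 2 < \<epsilon>" using b2 by simp
    show ?thesis using b1 b3 by (rule le_less_trans)
  qed
  have pXsum: "\<And>x. pX P x = (\<Sum>y\<in>UNIV. pXY P x y)" by (simp add: pX_def pXY_def)
  have pYsum: "\<And>y. pY P y = (\<Sum>x\<in>UNIV. pXY P x y)" by (simp add: pY_def pXY_def)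
  define SG1 where "SG1 = (\<Sum>x\<in>UNIV. \<Sum>y\<in>UNIV. if (x,y) \<in> G1 then p x y else 0)"
  define SX where "SX = (\<Sum>x\<in>UNIV. \<Sum>y\<in>UNIV. if \<not> \<bar>1 - \<alpha>x x / q\<bar> \<le> 1/2 then p x y else 0)"
  define SY where "SY = (\<Sum>x\<in>UNIV. \<Sum>y\<in>UNIV. if \<not> \<bar>1 - \<alpha>y y / q\<bar> \<le> 1/2 then p x y else 0)"
  have pt1: "p x y \<le> (if (x,y) \<in> G1 then p x y else 0) + 2*\<bar>pXY P x y - p x y\<bar>
     + (if \<not> \<bar>1 - \<alpha>x x / q\<bar> \<le> 1/2 then p x y else 0) + (if \<not> \<bar>1 - \<alpha>y y / q\<bar> \<le> 1/2 then p x y else 0)" for x y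
  proof -
    have nn: "0 \<le> (if (x,y) \<in> G1 then p x y else 0)" "0 \<le> 2*\<bar>pXY P x y - p x y\<bar>"
       "0 \<le> (if \<not> \<bar>1 - \<alpha>x x / q\<bar> \<le> 1/2 then p x y else 0)" "0 \<le> (if \<not> \<bar>1 - \<alpha>y y / q\<bar> \<le> 1/2 then p x y else 0)"
      using p0[of x y] by auto
    have d: "pXY P x y - p x y = p x y * (\<alpha>xy x y / q - 1)" by (simp add: pXYe algebra_simps)
    consider "p x y = 0" | "(x,y) \<in> G1" | "\<not> \<bar>1 - \<alpha>xy x y / q\<bar> \<le> 1/2" | "\<not> \<bar>1 - \<alpha>x x / q\<bar> \<le> 1/2"
      | "\<not> \<bar>1 - \<alpha>y y / q\<bar> \<le> 1/2"
      using p0[of x y] unfolding G1_def by force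
    thus ?thesis
    proof cases
      case 3
      have "\<bar>pXY P x y - p x y\<bar> = p x y * \<bar>1 - \<alpha>xy x y / q\<bar>" unfolding d abs_mult using p0[of x y] by (simp add: abs_minus_commute)
      also have "\<dots> \<ge> p x y * (1/2)" using 3 p0[of x y] by (intro mult_left_mono) auto
      finally have "p x y \<le> 2*\<bar>pXY P x y - p x y\<bar>" by simp
      thus ?thesis using nn by linarith
    qed (use nn in auto)
  qed
  have sx: "SX \<le> 2 * L1"
  proof -
    have "SX = (\<Sum>x\<in>UNIV. if \<not> \<bar>1 - \<alpha>x x / q\<bar> \<le> 1/2 then margX p x else 0)"
      unfolding SX_def margX_def by (intro sum.cong refl) auto
    also have "\<dots> \<le> (\<Sum>x\<in>UNIV. 2 * (\<Sum>y\<in>UNIV. \<bar>pXY P x y - p x y\<bar>))"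
    proof (rule sum_mono)
      fix x
      have e: "margX p x - pX P x = margX p x * (1 - \<alpha>x x / q)" by (simp add: pXe algebra_simps)
      have t: "\<bar>margX p x - pX P x\<bar> \<le> (\<Sum>y\<in>UNIV. \<bar>pXY P x y - p x y\<bar>)"
      proof -
        have "margX p x - pX P x = (\<Sum>y\<in>UNIV. p x y - pXY P x y)"
          by (simp add: margX_def pXsum sum_subtractf)
        hence "\<bar>margX p x - pX P x\<bar> \<le> (\<Sum>y\<in>UNIV. \<bar>p x y - pXY P x y\<bar>)" by (simp add: sum_abs)
        thus ?thesis by (simp add: abs_minus_commute)
      qed
      show "(if \<not> \<bar>1 - \<alpha>x x / q\<bar> \<le> 1/2 then margX p x else 0) \<le> 2 * (\<Sum>y\<in>UNIV. \<bar>pXY P x y - p x y\<bar>)"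
      proof (cases "\<bar>1 - \<alpha>x x / q\<bar> \<le> 1/2")
        case True thus ?thesis by (simp add: sum_nonneg)
      next
        case False
        have "margX p x * (1/2) \<le> margX p x * \<bar>1 - \<alpha>x x / q\<bar>" using False mX0[of x] by (intro mult_left_mono) auto
        also have "\<dots> = \<bar>margX p x - pX P x\<bar>" unfolding e abs_mult using mX0[of x] by simp
        finally show ?thesis using t False by simp
      qed
    qed
    finally show ?thesis unfolding L1_def by (simp add: sum_distrib_left)
  qed
  have sy: "SY \<le> 2 * L1"
  proof -
    have "SY = (\<Sum>y\<in>UNIV. \<Sum>x\<in>UNIV. if \<not> \<bar>1 - \<alpha>y y / q\<bar> \<le> 1/2 then p x y else 0)"
      unfolding SY_def by (rule sum.swap)
    also have "\<dots> = (\<Sum>y\<in>UNIV. if \<not> \<bar>1 - \<alpha>y y / q\<bar> \<le> 1/2 then margY p y else 0)"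
      unfolding margY_def by (intro sum.cong refl) auto
    also have "\<dots> \<le> (\<Sum>y\<in>UNIV. 2 * (\<Sum>x\<in>UNIV. \<bar>pXY P x y - p x y\<bar>))"
    proof (rule sum_mono)
      fix y
      have e: "margY p y - pY P y = margY p y * (1 - \<alpha>y y / q)" by (simp add: pYe algebra_simps)
      have t: "\<bar>margY p y - pY P y\<bar> \<le> (\<Sum>x\<in>UNIV. \<bar>pXY P x y - p x y\<bar>)"
      proof -
        have "margY p y - pY P y = (\<Sum>x\<in>UNIV. p x y - pXY P x y)"
          by (simp add: margY_def pYsum sum_subtractf)
        hence "\<bar>margY p y - pY P y\<bar> \<le> (\<Sum>x\<in>UNIV. \<bar>p x y - pXY P x y\<bar>)" by (simp add: sum_abs)
        thus ?thesis by (simp add: abs_minus_commute)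
      qed
      show "(if \<not> \<bar>1 - \<alpha>y y / q\<bar> \<le> 1/2 then margY p y else 0) \<le> 2 * (\<Sum>x\<in>UNIV. \<bar>pXY P x y - p x y\<bar>)"
      proof (cases "\<bar>1 - \<alpha>y y / q\<bar> \<le> 1/2")
        case True thus ?thesis by (simp add: sum_nonneg)
      next
        case False
        have "margY p y * (1/2) \<le> margY p y * \<bar>1 - \<alpha>y y / q\<bar>" using False mY0[of y] by (intro mult_left_mono) auto
        also have "\<dots> = \<bar>margY p y - pY P y\<bar>" unfolding e abs_mult using mY0[of y] by simp
        finally show ?thesis using t False by simp
      qed
    qed
    also have "\<dots> = 2 * L1" unfolding L1_def sum_distrib_left[symmetric] by (subst sum.swap) simp
    finally show ?thesis .
  qed
  have c1sum: "1 \<le> SG1 + 2 * L1 + SX + SY"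
  proof -
    have "1 = (\<Sum>x\<in>UNIV. \<Sum>y\<in>UNIV. p x y)" using p_sum by simp
    also have "\<dots> \<le> (\<Sum>x\<in>UNIV. \<Sum>y\<in>UNIV. (if (x,y) \<in> G1 then p x y else 0) + 2*\<bar>pXY P x y - p x y\<bar>
     + (if \<not> \<bar>1 - \<alpha>x x / q\<bar> \<le> 1/2 then p x y else 0) + (if \<not> \<bar>1 - \<alpha>y y / q\<bar> \<le> 1/2 then p x y else 0))"
      by (intro sum_mono pt1)
    also have "\<dots> = SG1 + 2 * L1 + SX + SY"
      unfolding SG1_def L1_def SX_def SY_def by (simp add: sum.distrib sum_distrib_left)
    finally show ?thesis .
  qed
  have claim1: "(\<Sum>(x, y)\<in>G1. p x y) > 1 - 6 * \<epsilon>"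
    unfolding sum_set_prod SG1_def[symmetric] using c1sum sx sy L1lt by linarith
  define S1 where "S1 x y = relent (Mxy x y) (Mx x)" for x y
  define S2 where "S2 x y = relent (Mxy x y) (My y)" for x y
  have S1e: "S1 x y = relent (\<lambda>m. P x y m / pXY P x y) (\<lambda>m. pXM P x m / pX P x)" for x y
    by (simp add: S1_def Mxy_def Mx_def)
  have S2e: "S2 x y = relent (\<lambda>m. P x y m / pXY P x y) (\<lambda>m. pYM P y m / pY P y)" for x y
    by (simp add: S2_def Mxy_def My_def)
  have gS1: "S1 x y \<ge> 0" if pos: "pXY P x y > 0" for x y
    unfolding S1e using condX_facts[OF P0 pos] by (intro gibbs) auto
  have gS2: "S2 x y \<ge> 0" if pos: "pXY P x y > 0" for x y
    unfolding S2e using condY_facts[OF P0 pos] by (intro gibbs) auto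
  define SG2 where "SG2 = (\<Sum>x\<in>UNIV. \<Sum>y\<in>UNIV. if (x,y) \<in> G2 then p x y else 0)"
  define SB where "SB = (\<Sum>x\<in>UNIV. \<Sum>y\<in>UNIV. if (x,y) \<notin> G2 then pXY P x y else 0)"
  have pt2: "p x y \<le> (if (x,y) \<in> G2 then p x y else 0) + (\<bar>pXY P x y - p x y\<bar> + (p x y - pXY P x y))/2
     + (if (x,y) \<notin> G2 then pXY P x y else 0)" for x y
  proof -
    have h1: "pXY P x y - p x y \<le> \<bar>pXY P x y - p x y\<bar>" "p x y - pXY P x y \<le> \<bar>pXY P x y - p x y\<bar>"
      by auto
    have h2: "0 \<le> pXY P x y" by (rule pXY0)
    have h3: "p x y \<le> (\<bar>pXY P x y - p x y\<bar> + (p x y - pXY P x y))/2 + pXY P x y" using h1 h2 by argo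
    have h4: "p x y \<le> p x y + (\<bar>pXY P x y - p x y\<bar> + (p x y - pXY P x y))/2" using h1 by argo
    show ?thesis using h3 h4 h2 by (cases "(x,y) \<in> G2") auto
  qed
  have c2a: "1 \<le> SG2 + L1/2 + SB"
  proof -
    have "1 = (\<Sum>x\<in>UNIV. \<Sum>y\<in>UNIV. p x y)" using p_sum by simp
    also have "\<dots> \<le> (\<Sum>x\<in>UNIV. \<Sum>y\<in>UNIV. (if (x,y) \<in> G2 then p x y else 0) + (\<bar>pXY P x y - p x y\<bar> + (p x y - pXY P x y))/2
     + (if (x,y) \<notin> G2 then pXY P x y else 0))"
      by (intro sum_mono pt2)
    also have "\<dots> = SG2 + (L1 + ((\<Sum>x\<in>UNIV. \<Sum>y\<in>UNIV. p x y) - (\<Sum>x\<in>UNIV. \<Sum>y\<in>UNIV. pXY P x y)))/2 + SB"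
      unfolding SG2_def L1_def SB_def by (simp only: sum.distrib sum_subtractf sum_divide_distrib[symmetric])
    also have "\<dots> = SG2 + L1/2 + SB" using p_sum sumXY by simp
    finally show ?thesis .
  qed
  have cpos: "c / \<epsilon> > 0" using c_ge eps_pos by simp
  have ptM: "c / \<epsilon> * (if (x,y) \<notin> G2 then pXY P x y else 0) \<le> pXY P x y * S1 x y + pXY P x y * S2 x y" for x y
  proof (cases "(x,y) \<in> G2")
    case True
    show ?thesis
    proof (cases "pXY P x y = 0")
      case False
      hence "pXY P x y > 0" using pXY0[of x y] by simp
      thus ?thesis using True gS1 gS2 by simp
    qed (use True in simp)
  next
    case False
    show ?thesis
    proof (cases "p x y > 0")
      case True
      hence "c / \<epsilon> < S1 x y + S2 x y" using False unfolding G2_def S1_def S2_def by auto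
      hence "pXY P x y * (c / \<epsilon>) \<le> pXY P x y * (S1 x y + S2 x y)" using pXY0[of x y]
        by (intro mult_left_mono) auto
      thus ?thesis using False by (simp add: algebra_simps)
    next
      case nP: False
      hence "p x y = 0" using p0[of x y] by simp
      thus ?thesis by (simp add: pXYe)
    qed
  qed
  have SBle: "SB \<le> \<epsilon>"
  proof -
    have "c / \<epsilon> * SB = (\<Sum>x\<in>UNIV. \<Sum>y\<in>UNIV. c / \<epsilon> * (if (x,y) \<notin> G2 then pXY P x y else 0))"
      unfolding SB_def by (simp add: sum_distrib_left)
    also have "\<dots> \<le> (\<Sum>x\<in>UNIV. \<Sum>y\<in>UNIV. pXY P x y * S1 x y + pXY P x y * S2 x y)"
      by (intro sum_mono ptM)
    also have "\<dots> = cmi_YM_X P + cmi_XM_Y P"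
      unfolding sum.distrib S1e S2e cmiX_ident[OF P0] cmiY_ident[OF P0] ..
    also have "\<dots> \<le> c" using hyp3 by simp
    also have "\<dots> = c / \<epsilon> * \<epsilon>" using eps_pos by simp
    finally show ?thesis using cpos by (rule mult_left_le_imp_le)
  qed
  have claim2: "(\<Sum>(x, y)\<in>G2. p x y) \<ge> 1 - 3 * \<epsilon> / 2"
    unfolding sum_set_prod SG2_def[symmetric] using c2a SBle L1lt by linarith
  have claim3: "(\<Sum>(x, y)\<in>G1 \<inter> G2. p x y) \<ge> 1 - 15 * \<epsilon> / 2"
  proof -
    have "(\<Sum>x\<in>UNIV. \<Sum>y\<in>UNIV. (if (x,y) \<in> G1 then p x y else 0) + (if (x,y) \<in> G2 then p x y else 0) - p x y)
       \<le> (\<Sum>x\<in>UNIV. \<Sum>y\<in>UNIV. if (x,y) \<in> G1 \<inter> G2 then p x y else 0)"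
      by (intro sum_mono) (use p0 in auto)
    moreover have "(\<Sum>x\<in>UNIV. \<Sum>y\<in>UNIV. (if (x,y) \<in> G1 then p x y else 0) + (if (x,y) \<in> G2 then p x y else 0) - p x y)
        = SG1 + SG2 - 1"
      unfolding SG1_def SG2_def using p_sum by (simp add: sum.distrib sum_subtractf)
    ultimately have "SG1 + SG2 - 1 \<le> (\<Sum>(x, y)\<in>G1 \<inter> G2. p x y)" unfolding sum_set_prod by simp
    moreover have "SG1 > 1 - 6 * \<epsilon>" using claim1 unfolding sum_set_prod SG1_def .
    moreover have "SG2 \<ge> 1 - 3 * \<epsilon> / 2" using claim2 unfolding sum_set_prod SG2_def .
    ultimately show ?thesis by linarith
  qed
  have claim4: "G1 \<inter> G2 \<subseteq> G"
  proof
    fix z assume zin: "z \<in> G1 \<inter> G2"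
    obtain x y where z: "z = (x,y)" by (cases z)
    from zin have pp: "p x y > 0" and h1: "\<bar>1 - \<alpha>xy x y / q\<bar> \<le> 1/2" and h2: "\<bar>1 - \<alpha>x x / q\<bar> \<le> 1/2"
      and h3: "\<bar>1 - \<alpha>y y / q\<bar> \<le> 1/2" and hS: "S1 x y + S2 x y \<le> c / \<epsilon>"
      unfolding z G1_def G2_def S1_def S2_def by auto
    have r1: "\<alpha>xy x y / q \<le> 3/2" "\<alpha>x x / q \<ge> 1/2" "\<alpha>y y / q \<ge> 1/2" "\<alpha>xy x y / q \<ge> 1/2"
      using h1 apply argo using h2 apply argo using h3 apply argo using h1 apply argo done
    have axy1: "\<alpha>xy x y \<le> 3/2 * q" using r1(1) q_pos by (simp add: pos_divide_le_eq)
    have axy2: "\<alpha>xy x y \<ge> 1/2 * q" using r1(4) q_pos by (simp add: pos_le_divide_eq)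
    have ax: "\<alpha>x x \<ge> 1/2 * q" using r1(2) q_pos by (simp add: pos_le_divide_eq)
    have ay: "\<alpha>y y \<ge> 1/2 * q" using r1(3) q_pos by (simp add: pos_le_divide_eq)
    have axyp: "\<alpha>xy x y > 0" and axp: "\<alpha>x x > 0" and ayp: "\<alpha>y y > 0" using axy2 ax ay q_pos by auto
    have mxp: "margX p x > 0" using mXp[of x y] pp by simp
    have myp: "margY p y > 0" using mYp[of x y] pp by simp
    have pXYp: "pXY P x y > 0" using pp axyp q_pos by (simp add: pXYe)
    have S1b: "S1 x y \<le> c / \<epsilon>" and S2b: "S2 x y \<le> c / \<epsilon>" using hS gS1[OF pXYp] gS2[OF pXYp] by auto
    have Mxye: "Mxy x y m = ux x m * uy y m / \<alpha>xy x y" for m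
      using pp q_pos axyp by (simp add: Mxy_def Pd pXYe field_simps)
    have mxv: "margX p x * vx x m = (\<Sum>y\<in>UNIV. p x y * uy y m)" for m
      unfolding vx_def cond_y_x_def sum_distrib_left using mxp by (intro sum.cong) auto
    have myv: "margY p y * vy y m = (\<Sum>x\<in>UNIV. p x y * ux x m)" for m
      unfolding vy_def cond_x_y_def sum_distrib_left using myp by (intro sum.cong) auto
    have pXMe: "pXM P x m = ux x m * (margX p x * vx x m) / q" for m
      unfolding mxv pXM_def Pd by (simp add: sum_divide_distrib sum_distrib_left algebra_simps)
    have pYMe: "pYM P y m = uy y m * (margY p y * vy y m) / q" for m
      unfolding myv pYM_def Pd by (simp add: sum_divide_distrib sum_distrib_left algebra_simps)
    have Mxe: "Mx x m = ux x m * vx x m / \<alpha>x x" for m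
      using mxp q_pos axp by (simp add: Mx_def pXMe pXe field_simps)
    have Mye: "My y m = uy y m * vy y m / \<alpha>y y" for m
      using myp q_pos ayp by (simp add: My_def pYMe pYe field_simps)
    have vx0: "vx x m \<ge> 0" for m unfolding vx_def cond_y_x_def using p0 mX0 uy0
      by (intro sum_nonneg mult_nonneg_nonneg divide_nonneg_nonneg) auto
    have vy0: "vy y m \<ge> 0" for m unfolding vy_def cond_x_y_def using p0 mY0 ux0
      by (intro sum_nonneg mult_nonneg_nonneg divide_nonneg_nonneg) auto
    define t where "t = (c / \<epsilon> + 1) / \<epsilon>"
    have tpos: "t > 0" unfolding t_def using cpos eps_pos by simp
    have Dt: "\<Delta> = t + 2" unfolding t_def \<Delta>_def ..
    have p2: "2 powr \<Delta> / 4 = 2 powr t" unfolding Dt by (simp add: powr_add)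
    have CX: "\<forall>m. Mxy x y m \<ge> 0" "\<forall>m. Mx x m \<ge> 0" "sum (Mxy x y) UNIV = 1" "sum (Mx x) UNIV = 1"
      "\<forall>m. Mxy x y m \<noteq> 0 \<longrightarrow> Mx x m > 0"
      using condX_facts[OF P0 pXYp] by (simp_all add: Mxy_def Mx_def)
    have CY: "\<forall>m. My y m \<ge> 0" "sum (My y) UNIV = 1" "\<forall>m. Mxy x y m \<noteq> 0 \<longrightarrow> My y m > 0"
      using condY_facts[OF P0 pXYp] by (simp_all add: Mxy_def My_def)
    define A1 where "A1 = {m. \<not> uy y m / vx x m \<le> 2 powr \<Delta>}"
    define A2 where "A2 = {m. \<not> ux x m / vy y m \<le> 2 powr \<Delta>}"
    have tA1: "t * sum (Mxy x y) A1 \<le> relent (Mxy x y) (Mx x) + 1"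
    proof (rule tail)
      show "\<forall>a. 0 \<le> Mxy x y a" "\<forall>a. 0 \<le> Mx x a" "sum (Mx x) UNIV \<le> 1"
        "\<forall>a. Mxy x y a \<noteq> 0 \<longrightarrow> 0 < Mx x a" "0 < t" using CX tpos by auto
      show "\<forall>a\<in>A1. 0 < Mxy x y a \<longrightarrow> t \<le> log 2 (Mxy x y a / Mx x a)"
      proof (intro ballI impI)
        fix m assume mA: "m \<in> A1" and mp: "0 < Mxy x y m"
        have big: "uy y m / vx x m > 2 powr \<Delta>" using mA unfolding A1_def by simp
        have uxp: "ux x m > 0" and uyp: "uy y m > 0" using mp axyp ux0[of x m] uy0[of y m]
          unfolding Mxye by (auto simp: order_less_le)
        have vxp: "vx x m > 0"
        proof (rule ccontr)
          assume "\<not> vx x m > 0"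
          hence "vx x m = 0" using vx0[of m] by simp
          thus False using big by simp
        qed
        have rat: "Mxy x y m / Mx x m = (uy y m / vx x m) * (\<alpha>x x / \<alpha>xy x y)"
          using uxp vxp axp axyp by (simp add: Mxye Mxe field_simps)
        have "\<alpha>x x / \<alpha>xy x y \<ge> 1/3" using ax axy1 axyp by (simp add: pos_le_divide_eq)
        hence "(uy y m / vx x m) * (1/3) \<le> Mxy x y m / Mx x m" unfolding rat
          using uyp vxp by (intro mult_left_mono) auto
        moreover have "2 powr \<Delta> / 4 \<le> (uy y m / vx x m) * (1/3)"
        proof -
          have Rp: "uy y m / vx x m > 0" using uyp vxp by simp
          show ?thesis using big Rp by argo
        qed
        ultimately have "2 powr t \<le> Mxy x y m / Mx x m" unfolding p2 by simp
        hence "log 2 (2 powr t) \<le> log 2 (Mxy x y m / Mx x m)"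
          using less_le_trans[of 0 "2 powr t"] by (subst log_le_cancel_iff) auto
        thus "t \<le> log 2 (Mxy x y m / Mx x m)" by simp
      qed
    qed
    have tA2: "t * sum (Mxy x y) A2 \<le> relent (Mxy x y) (My y) + 1"
    proof (rule tail)
      show "\<forall>a. 0 \<le> Mxy x y a" "\<forall>a. 0 \<le> My y a" "sum (My y) UNIV \<le> 1"
        "\<forall>a. Mxy x y a \<noteq> 0 \<longrightarrow> 0 < My y a" "0 < t" using CX CY tpos by auto
      show "\<forall>a\<in>A2. 0 < Mxy x y a \<longrightarrow> t \<le> log 2 (Mxy x y a / My y a)"
      proof (intro ballI impI)
        fix m assume mA: "m \<in> A2" and mp: "0 < Mxy x y m"
        have big: "ux x m / vy y m > 2 powr \<Delta>" using mA unfolding A2_def by simp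
        have uxp: "ux x m > 0" and uyp: "uy y m > 0" using mp axyp ux0[of x m] uy0[of y m]
          unfolding Mxye by (auto simp: order_less_le)
        have vyp: "vy y m > 0"
        proof (rule ccontr)
          assume "\<not> vy y m > 0"
          hence "vy y m = 0" using vy0[of m] by simp
          thus False using big by simp
        qed
        have rat: "Mxy x y m / My y m = (ux x m / vy y m) * (\<alpha>y y / \<alpha>xy x y)"
          using uyp vyp ayp axyp by (simp add: Mxye Mye field_simps)
        have "\<alpha>y y / \<alpha>xy x y \<ge> 1/3" using ay axy1 axyp by (simp add: pos_le_divide_eq)
        hence "(ux x m / vy y m) * (1/3) \<le> Mxy x y m / My y m" unfolding rat
          using uxp vyp by (intro mult_left_mono) auto
        moreover have "2 powr \<Delta> / 4 \<le> (ux x m / vy y m) * (1/3)"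
        proof -
          have Rp: "ux x m / vy y m > 0" using uxp vyp by simp
          show ?thesis using big Rp by argo
        qed
        ultimately have "2 powr t \<le> Mxy x y m / My y m" unfolding p2 by simp
        hence "log 2 (2 powr t) \<le> log 2 (Mxy x y m / My y m)"
          using less_le_trans[of 0 "2 powr t"] by (subst log_le_cancel_iff) auto
        thus "t \<le> log 2 (Mxy x y m / My y m)" by simp
      qed
    qed
    have et: "\<epsilon> * t = c / \<epsilon> + 1" unfolding t_def using eps_pos by simp
    have s1: "sum (Mxy x y) A1 \<le> \<epsilon>"
    proof -
      have "t * sum (Mxy x y) A1 \<le> t * \<epsilon>" using tA1 S1b et unfolding S1_def by (simp add: mult.commute)
      thus ?thesis using tpos by (rule mult_left_le_imp_le)
    qed
    have s2: "sum (Mxy x y) A2 \<le> \<epsilon>"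
    proof -
      have "t * sum (Mxy x y) A2 \<le> t * \<epsilon>" using tA2 S2b et unfolding S2_def by (simp add: mult.commute)
      thus ?thesis using tpos by (rule mult_left_le_imp_le)
    qed
    define Gd where "Gd = {m. uy y m / vx x m \<le> 2 powr \<Delta> \<and> ux x m / vy y m \<le> 2 powr \<Delta>}"
    have "1 = sum (Mxy x y) UNIV" using CX by simp
    also have "\<dots> \<le> (\<Sum>m\<in>UNIV. (if m \<in> Gd then Mxy x y m else 0) + (if m \<in> A1 then Mxy x y m else 0)
        + (if m \<in> A2 then Mxy x y m else 0))"
      by (intro sum_mono) (use CX in \<open>auto simp: Gd_def A1_def A2_def\<close>)
    also have "\<dots> = sum (Mxy x y) Gd + sum (Mxy x y) A1 + sum (Mxy x y) A2"
      by (simp only: sum.distrib sum_set_ind[symmetric])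
    finally have "sum (Mxy x y) Gd \<ge> 1 - 2 * \<epsilon>" using s1 s2 by linarith
    thus "z \<in> G" unfolding z G_def Gd_def using pp by simp
  qed
  show ?thesis using claim1 claim2 claim3 claim4 by blast
qed

end
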